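(* In the probit setting below, let $\lambda=\sup_{t\in(0,1)}\sup_{\alpha\ne0}\|\Sigma^{-1/2}X^TD(\hat B+t\alpha)X\alpha\|^2/\|\Sigma^{1/2}\alpha\|^2$. Then $\lambda^{1/2}\le\lambda_{\max}(\Sigma^{-1/2}X^TX\Sigma^{-1/2})-\frac{2}{\pi}\min_{1\le j\le2^p}\lambda_{\min}(\Sigma^{-1/2}W(S_j)\Sigma^{-1/2})$.
   Context: Probit setting: covariates $X_1,\dots,X_n\in\mathbb{R}^p$, responses $Y_i\in\{0,1\}$, $X$ the $n\times p$ matrix with rows $X_i^T$; prior $\omega(\beta)\propto\exp\{-\frac12(\beta-v)^TQ(\beta-v)\}$, $Q$ positive definite or zero; posterior density $\propto\prod_i\Phi(X_i^T\beta)^{Y_i}(1-\Phi(X_i^T\beta))^{1-Y_i}\omega(\beta)$ ($\Phi,\phi$ standard normal cdf/pdf), assumed proper; $\Sigma=X^TX+Q$; $\hat B$ the posterior mode. $g(\theta)=\theta\phi(\theta)/\Phi(\theta)+(\phi(\theta)/\Phi(\theta))^2$; $D(\beta)$ is the diagonal $n\times n$ matrix with $i$th entry $1-g(X_i^T\beta)1_{\{1\}}(Y_i)-g(-X_i^T\beta)1_{\{0\}}(Y_i)$. $S_1,\dots,S_{2^p}$ are the open orthants of $\mathbb{R}^p$, and $W(S_j)=\sum_{i:X_i\in S_j}X_i1_{\{0\}}(Y_i)X_i^T+\sum_{i:X_i\in-S_j}X_i1_{\{1\}}(Y_i)X_i^T$. $\lambda_{\max},\lambda_{\min}$ are the largest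 and smallest eigenvalues. *)

theory Defs
  imports "HOL-Probability.Probability"
begin

definition Phi :: "real \<Rightarrow> real" where
  "Phi x = interval_lebesgue_integral lborel (-\<infinity>) (ereal x) std_normal_density"

abbreviation phi :: "real \<Rightarrow> real" where
  "phi \<equiv> std_normal_density"

definition gfun :: "real \<Rightarrow> real" where
  "gfun \<theta> = \<theta> * phi \<theta> / Phi \<theta> + (phi \<theta> / Phi \<theta>)\<^sup>2"

definition diag_mat :: "('n::finite \<Rightarrow> real) \<Rightarrow> real^'n^'n" where
  "diag_mat d = (\<chi> i j. if i = j then d i else 0)"

definition outer :: "real^'m::finite \<Rightarrow> real^'m \<Rightarrow> real^'m^'m" where
  "outer x y = (\<chi> i j. x $ i * y $ j)"

definition sym_mat :: "real^'n::finite^'n \<Rightarrow> bool" where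
  "sym_mat A \<longleftrightarrow> transpose A = A"

definition psd :: "real^'n::finite^'n \<Rightarrow> bool" where
  "psd A \<longleftrightarrow> sym_mat A \<and> (\<forall>x. 0 \<le> x \<bullet> (A *v x))"

definition pd :: "real^'n::finite^'n \<Rightarrow> bool" where
  "pd A \<longleftrightarrow> sym_mat A \<and> (\<forall>x. x \<noteq> 0 \<longrightarrow> 0 < x \<bullet> (A *v x))"

definition mat_sqrt :: "real^'n::finite^'n \<Rightarrow> real^'n^'n" where
  "mat_sqrt A = (THE R. psd R \<and> R ** R = A)"

definition mat_isqrt :: "real^'n::finite^'n \<Rightarrow> real^'n^'n" where
  "mat_isqrt A = matrix_inv (mat_sqrt A)"

definition eigenvalues :: "real^'n::finite^'n \<Rightarrow> real set" where
  "eigenvalues A = {c. \<exists>x. x \<noteq> 0 \<and> A *v x = c *\<^sub>R x}"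

definition lambda_max :: "real^'n::finite^'n \<Rightarrow> real" where
  "lambda_max A = Max (eigenvalues A)"

definition lambda_min :: "real^'n::finite^'n \<Rightarrow> real" where
  "lambda_min A = Min (eigenvalues A)"

text \<open>Open orthant indexed by a sign pattern \<open>s\<close> (True = positive coordinate).\<close>
definition orthant :: "('p::finite \<Rightarrow> bool) \<Rightarrow> (real^'p) set" where
  "orthant s = {x. \<forall>k. if s k then 0 < x $ k else x $ k < 0}"

definition Wmat :: "real^'p::finite^'n::finite \<Rightarrow> ('n \<Rightarrow> nat) \<Rightarrow> (real^'p) set \<Rightarrow> real^'p^'p" where
  "Wmat X Y S =
     (\<Sum>i\<in>{i. X $ i \<in> S}. (if Y i = 0 then 1 else 0) *\<^sub>R outer (X $ i) (X $ i)) +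
     (\<Sum>i\<in>{i. X $ i \<in> uminus ` S}. (if Y i = 1 then 1 else 0) *\<^sub>R outer (X $ i) (X $ i))"

definition Dmat :: "real^'p::finite^'n::finite \<Rightarrow> ('n \<Rightarrow> nat) \<Rightarrow> real^'p \<Rightarrow> real^'n^'n" where
  "Dmat X Y \<beta> = diag_mat (\<lambda>i. 1 - gfun (X $ i \<bullet> \<beta>) * (if Y i = 1 then 1 else 0)
                                 - gfun (- (X $ i \<bullet> \<beta>)) * (if Y i = 0 then 1 else 0))"

definition prior :: "real^'p::finite^'p \<Rightarrow> real^'p \<Rightarrow> real^'p \<Rightarrow> real" where
  "prior Q v \<beta> = exp (- (1/2) * ((\<beta> - v) \<bullet> (Q *v (\<beta> - v))))"

definition post :: "real^'p::finite^'n::finite \<Rightarrow> ('n \<Rightarrow> nat) \<Rightarrow> real^'p^'p \<Rightarrow> real^'p \<Rightarrow> real^'p \<Rightarrow> real" where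
  "post X Y Q v \<beta> = (\<Prod>i\<in>UNIV. Phi (X $ i \<bullet> \<beta>) ^ Y i * (1 - Phi (X $ i \<bullet> \<beta>)) ^ (1 - Y i)) * prior Q v \<beta>"

end

theory Submission
  imports Defs "HOL-Real_Asymp.Real_Asymp"
begin

lemma phi_eq: "phi = (\<lambda>x. (1 / sqrt (2 * pi)) * exp (- x\<^sup>2 / 2))"
  by (rule ext) (simp add: std_normal_density_def)

lemma phi_pos: "0 < phi x" by (simp add: normal_density_pos)

lemma phi_deriv: "(phi has_real_derivative (- x * phi x)) (at x within s)"
  unfolding phi_eq by (auto intro!: derivative_eq_intros simp: field_simps)

lemma phi_lim_bot: "(phi \<longlongrightarrow> 0) at_bot"
  unfolding phi_eq by real_asymp

lemma phi_lim_bot2: "((\<lambda>x. x * phi x) \<longlongrightarrow> 0) at_bot"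
  unfolding phi_eq by real_asymp

lemma phi_even[simp]: "phi (-x) = phi x" by (simp add: std_normal_density_def)

lemma int_ind_phi: "A \<in> sets borel \<Longrightarrow> integrable lborel (\<lambda>x. indicator A x * phi x)"
  using integrable_mult_indicator[of A lborel phi] by simp

lemma phi_int_ab: "interval_lebesgue_integrable lborel a b phi"
  unfolding interval_lebesgue_integrable_def set_integrable_def
  by (auto intro!: int_ind_phi)

lemma Phi_plus_tail: "Phi x + (LBINT y=ereal x..\<infinity>. phi y) = 1"
proof -
  have "Phi x + (LBINT y=ereal x..\<infinity>. phi y) = (LBINT y=-\<infinity>..\<infinity>. phi y)"
    unfolding Phi_def by (rule interval_integral_sum) (simp add: phi_int_ab)
  also have "\<dots> = 1"
    by (simp add: interval_lebesgue_integral_le_eq set_lebesgue_integral_def)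
  finally show ?thesis .
qed

lemma Phi_neg: "Phi (-x) = 1 - Phi x"
proof -
  have "Phi (-x) = (LBINT y=ereal x..\<infinity>. phi y)"
    unfolding Phi_def by (subst interval_integral_reflect) simp
  then show ?thesis using Phi_plus_tail[of x] by simp
qed

lemma Phi_split: "Phi u = Phi c + (LBINT y=ereal c..ereal u. phi y)"
  unfolding Phi_def by (rule interval_integral_sum[symmetric]) (simp add: phi_int_ab)

lemma Phi_deriv: "(Phi has_real_derivative phi x) (at x within s)"
proof -
  have "((\<lambda>u. LBINT y=ereal x..ereal u. phi y) has_vector_derivative (phi x)) (at x within {x-1..x+1})"
    by (rule interval_integral_FTC2) (auto intro!: continuous_intros simp: phi_eq)
  then have "((\<lambda>u. LBINT y=ereal x..ereal u. phi y) has_vector_derivative (phi x)) (at x)"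
    by (simp add: at_within_Icc_at)
  then have "((\<lambda>u. Phi x + (LBINT y=ereal x..ereal u. phi y)) has_real_derivative (phi x)) (at x)"
    by (auto intro!: derivative_eq_intros simp: has_real_derivative_iff_has_vector_derivative)
  moreover have "(\<lambda>u. Phi x + (LBINT y=ereal x..ereal u. phi y)) = Phi"
    by (rule ext) (simp add: Phi_split[symmetric])
  ultimately show ?thesis by (simp add: has_field_derivative_at_within)
qed

lemma Phi_set: "Phi x = (\<integral>y. indicator {..x} y *\<^sub>R phi y \<partial>lborel)"
proof -
  have "Phi x = (\<integral>y. indicator {..<x} y *\<^sub>R phi y \<partial>lborel)"
    unfolding Phi_def by (simp add: interval_lebesgue_integral_le_eq set_lebesgue_integral_def)
  also have "\<dots> = (\<integral>y. indicator {..x} y *\<^sub>R phi y \<partial>lborel)"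
    by (rule integral_cong_AE) (auto intro!: eventually_mono[OF AE_lborel_singleton[of x]] split: split_indicator)
  finally show ?thesis .
qed

lemma Phi_lim_top: "(Phi \<longlongrightarrow> 1) at_top"
proof -
  have "((\<lambda>y. \<integral>x. indicator {.. y} x *\<^sub>R phi x \<partial>lborel) \<longlongrightarrow> \<integral> x. phi x \<partial>lborel) at_top"
    by (rule tendsto_integral_at_top) auto
  then show ?thesis by (simp add: Phi_set[abs_def])
qed

lemma Phi_lim_bot: "(Phi \<longlongrightarrow> 0) at_bot"
proof -
  have "((\<lambda>x. 1 - Phi x) \<longlongrightarrow> 1 - 1) at_top"
    by (intro tendsto_intros Phi_lim_top)
  then have "((\<lambda>x. Phi (-x)) \<longlongrightarrow> 0) at_top" by (simp add: Phi_neg)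
  then show ?thesis by (simp add: filterlim_at_bot_mirror)
qed

lemma Phi_le1: "Phi x \<le> 1"
proof -
  have "Phi x \<le> (\<integral>y. phi y \<partial>lborel)"
    unfolding Phi_set by (rule integral_mono) (auto intro!: int_ind_phi split: split_indicator)
  then show ?thesis by simp
qed

lemma Phi_ge0: "0 \<le> Phi x"
  unfolding Phi_set by (rule integral_nonneg_AE) (auto split: split_indicator)

lemma Phi_strict: "a < b \<Longrightarrow> Phi a < Phi b"
  by (rule DERIV_pos_imp_increasing[of a b Phi]) (auto intro: Phi_deriv phi_pos)

lemma Phi_pos: "0 < Phi x"
  using Phi_strict[of "x - 1" x] Phi_ge0[of "x - 1"] by simp

lemma Phi_less1: "Phi x < 1"
  using Phi_strict[of x "x + 1"] Phi_le1[of "x + 1"] by simp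

lemma Phi_0: "Phi 0 = 1/2"
  using Phi_neg[of 0] by simp

lemma mono_lim_bot_ge:
  fixes f :: "real \<Rightarrow> real"
  assumes "x \<le> c" "\<And>u v. u \<le> v \<Longrightarrow> v \<le> c \<Longrightarrow> f u \<le> f v" "(f \<longlongrightarrow> L) at_bot"
  shows "L \<le> f x"
proof (rule tendsto_upperbound[OF assms(3)])
  show "\<forall>\<^sub>F i in at_bot. f i \<le> f x"
    using assms(1,2) by (auto simp: eventually_at_bot_linorder intro!: exI[of _ x])
qed simp

lemma anti_lim_bot_le:
  fixes f :: "real \<Rightarrow> real"
  assumes "x \<le> c" "\<And>u v. u \<le> v \<Longrightarrow> v \<le> c \<Longrightarrow> f v \<le> f u" "(f \<longlongrightarrow> L) at_bot"
  shows "f x \<le> L"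
proof (rule tendsto_lowerbound[OF assms(3)])
  show "\<forall>\<^sub>F i in at_bot. f x \<le> f i"
    using assms(1,2) by (auto simp: eventually_at_bot_linorder intro!: exI[of _ x])
qed simp

lemma Psi_nonneg: "0 \<le> \<theta> * Phi \<theta> + phi \<theta>"
proof (cases "\<theta> < 0")
  case False then show ?thesis using Phi_pos[of \<theta>] phi_pos[of \<theta>] by simp
next
  case True
  define n where "n = (\<lambda>t. Phi t + phi t / t)"
  have d: "(n has_real_derivative (- phi t / t\<^sup>2)) (at t)" if "t < 0" for t
    unfolding n_def using that
    by (auto intro!: derivative_eq_intros Phi_deriv phi_deriv simp: field_simps power2_eq_square)
  have lim: "(n \<longlongrightarrow> 0) at_bot"
  proof -
    have "((\<lambda>t. phi t / t) \<longlongrightarrow> 0) at_bot"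
      unfolding phi_eq by real_asymp
    then have "((\<lambda>t. Phi t + phi t / t) \<longlongrightarrow> 0 + 0) at_bot"
      by (intro tendsto_intros Phi_lim_bot)
    then show ?thesis by (simp add: n_def)
  qed
  have "n \<theta> \<le> 0"
  proof (rule anti_lim_bot_le[OF order_refl _ lim])
    fix u v assume "u \<le> v" "v \<le> \<theta>"
    then show "n v \<le> n u"
      using True
      by (intro DERIV_nonpos_imp_nonincreasing[of u v n])
         (auto intro!: exI d simp: phi_pos less_imp_le)
  qed
  then have "Phi \<theta> \<le> - phi \<theta> / \<theta>" by (simp add: n_def)
  then have "\<theta> * (- phi \<theta> / \<theta>) \<le> \<theta> * Phi \<theta>"
    using True by (intro mult_left_mono_neg) auto
  then show ?thesis using True by simp
qed

lemma m1_nonneg: "0 \<le> Phi \<theta> * (1 + \<theta>\<^sup>2) + \<theta> * phi \<theta>"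
proof -
  define m where "m = (\<lambda>t. Phi t + t * phi t / (t\<^sup>2 + 1))"
  have pos: "t\<^sup>2 + 1 \<noteq> 0" for t :: real by (smt (verit) zero_le_power2)
  have d: "(m has_real_derivative (2 * phi t / (t\<^sup>2 + 1)\<^sup>2)) (at t)" for t
  proof -
    have a: "0 \<le> t*t" "0 \<le> t*(t*(t*t))" using zero_le_square[of "t*t"] by (simp_all add: mult.assoc)
    then have nz: "1 + (t * (t * (t * t)) + t * (t * 2)) \<noteq> 0" "1 + t*t \<noteq> 0" by linarith+
    show ?thesis
    unfolding m_def using pos[of t]
    apply (auto intro!: derivative_eq_intros Phi_deriv phi_deriv)
    using nz apply (simp add: field_simps power2_eq_square)
    done
  qed
  have lim: "(m \<longlongrightarrow> 0) at_bot"
  proof -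
    have "((\<lambda>t. t * phi t / (t\<^sup>2 + 1)) \<longlongrightarrow> 0) at_bot"
      unfolding phi_eq by real_asymp
    then have "((\<lambda>t. Phi t + t * phi t / (t\<^sup>2 + 1)) \<longlongrightarrow> 0 + 0) at_bot"
      by (intro tendsto_intros Phi_lim_bot)
    then show ?thesis by (simp add: m_def)
  qed
  have "0 \<le> m \<theta>"
  proof (rule mono_lim_bot_ge[OF order_refl _ lim])
    fix u v assume "u \<le> v" "v \<le> \<theta>"
    then show "m u \<le> m v"
      by (intro DERIV_nonneg_imp_nondecreasing[of u v m])
         (auto intro!: exI d simp: phi_pos less_imp_le)
  qed
  then have "0 \<le> m \<theta> * (\<theta>\<^sup>2 + 1)" by simp
  also have "m \<theta> * (\<theta>\<^sup>2 + 1) = Phi \<theta> * (1 + \<theta>\<^sup>2) + \<theta> * phi \<theta>"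
    using pos[of \<theta>] by (simp add: m_def field_simps)
  finally show ?thesis .
qed

lemma H_nonneg: "0 \<le> (Phi \<theta>)\<^sup>2 - \<theta> * phi \<theta> * Phi \<theta> - (phi \<theta>)\<^sup>2"
proof -
  define H where "H = (\<lambda>t. (Phi t)\<^sup>2 - t * phi t * Phi t - (phi t)\<^sup>2)"
  have d: "(H has_real_derivative (phi t * (Phi t * (1 + t\<^sup>2) + t * phi t))) (at t)" for t
    unfolding H_def
    apply (auto intro!: derivative_eq_intros Phi_deriv phi_deriv)
    apply (simp add: field_simps power2_eq_square)
    done
  have lim: "(H \<longlongrightarrow> 0) at_bot"
  proof -
    have "((\<lambda>t. (Phi t)\<^sup>2 - (t * phi t) * Phi t - (phi t)\<^sup>2) \<longlongrightarrow> 0\<^sup>2 - 0 * 0 - 0\<^sup>2) at_bot"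
      by (intro tendsto_intros Phi_lim_bot phi_lim_bot phi_lim_bot2)
    then show ?thesis by (simp add: H_def)
  qed
  have "0 \<le> H \<theta>"
  proof (rule mono_lim_bot_ge[OF order_refl _ lim])
    fix u v assume "u \<le> v" "v \<le> \<theta>"
    then show "H u \<le> H v"
      by (intro DERIV_nonneg_imp_nondecreasing[of u v H])
         (auto intro!: exI d mult_nonneg_nonneg m1_nonneg simp: phi_pos less_imp_le)
  qed
  then show ?thesis by (simp add: H_def)
qed

lemma gfun_alt: "gfun \<theta> = phi \<theta> * (\<theta> * Phi \<theta> + phi \<theta>) / (Phi \<theta>)\<^sup>2"
  using Phi_pos[of \<theta>] by (simp add: gfun_def field_simps power2_eq_square)

lemma gfun_nonneg: "0 \<le> gfun \<theta>"
  unfolding gfun_alt using Psi_nonneg[of \<theta>] phi_pos[of \<theta>] by simp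

lemma gfun_le1: "gfun \<theta> \<le> 1"
proof -
  have "1 - gfun \<theta> = ((Phi \<theta>)\<^sup>2 - \<theta> * phi \<theta> * Phi \<theta> - (phi \<theta>)\<^sup>2) / (Phi \<theta>)\<^sup>2"
    using Phi_pos[of \<theta>] by (simp add: gfun_def field_simps power2_eq_square)
  also have "\<dots> \<ge> 0" using H_nonneg[of \<theta>] by simp
  finally show ?thesis by simp
qed

lemma dP_gen: "((\<lambda>t. (phi t)\<^sup>2 + t * phi t * Phi t - k * (Phi t)\<^sup>2) has_real_derivative
   (- phi t * ((t\<^sup>2 + (2*k-1)) * Phi t + t*phi t))) (at t)"
  by (auto intro!: derivative_eq_intros Phi_deriv phi_deriv simp: algebra_simps power2_eq_square)

lemma gfun_ge: assumes th: "\<theta> \<le> 0" shows "2 / pi \<le> gfun \<theta>"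
proof -
  define a where "a = 2 * (2 / pi) - 1"
  have a0: "0 < a" and a1: "a < 1" using pi_gt3 pi_less_4 by (auto simp: a_def field_simps)
  define c where "c = a * (a + 1) / (1 - a)"
  have c0: "0 \<le> c" using a0 a1 by (simp add: c_def)
  have cc: "c * (1 - a) = a * (a + 1)" using a1 by (simp add: c_def)
  define x0 where "x0 = sqrt c"
  have x00: "0 \<le> x0" using c0 by (simp add: x0_def)
  have big: "c \<le> t\<^sup>2" if "t \<le> - x0" for t
  proof -
    have "sqrt c \<le> \<bar>t\<bar>" using that x00 by (simp add: x0_def)
    then have "sqrt c \<le> sqrt (t\<^sup>2)" by simp
    then show ?thesis by (simp only: real_sqrt_le_iff)
  qed
  have small: "t\<^sup>2 \<le> c" if "- x0 \<le> t" "t \<le> 0" for t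
  proof -
    have "sqrt (t\<^sup>2) \<le> sqrt c" using that by (simp add: x0_def)
    then show ?thesis by (simp only: real_sqrt_le_iff)
  qed
  have apos: "0 < t\<^sup>2 + a" for t :: real using a0 by (smt (verit) zero_le_power2)
  define m where "m = (\<lambda>t. Phi t + t * phi t / (t\<^sup>2 + a))"
  have dm: "(m has_real_derivative (phi t * ((a - 1) * t\<^sup>2 + a * (a + 1)) / (t\<^sup>2 + a)\<^sup>2)) (at t)" for t
  proof -
    have nz: "t * t + a \<noteq> 0" using apos[of t] by (simp add: power2_eq_square)
    have "0 < (t*t+a)*(t*t+a)" using apos[of t] by (simp add: power2_eq_square)
    also have "(t*t+a)*(t*t+a) = a * a + (t * (t * (t * t)) + a * (t * (t * 2)))" by (simp add: algebra_simps)
    finally have nz2: "a * a + (t * (t * (t * t)) + a * (t * (t * 2))) \<noteq> 0" by simp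
    show ?thesis
      unfolding m_def using apos[of t]
      apply (auto intro!: derivative_eq_intros Phi_deriv phi_deriv)
      using nz nz2 apply (simp add: field_simps power2_eq_square)
      done
  qed
  have mlim: "(m \<longlongrightarrow> 0) at_bot"
  proof -
    have "((\<lambda>t. t * phi t / (t\<^sup>2 + a)) \<longlongrightarrow> 0) at_bot"
      unfolding phi_eq by real_asymp
    then have "((\<lambda>t. Phi t + t * phi t / (t\<^sup>2 + a)) \<longlongrightarrow> 0 + 0) at_bot"
      by (intro tendsto_intros Phi_lim_bot)
    then show ?thesis by (simp add: m_def)
  qed
  have dm_neg: "phi t * ((a - 1) * t\<^sup>2 + a * (a + 1)) / (t\<^sup>2 + a)\<^sup>2 \<le> 0" if "t \<le> - x0" for t
  proof -
    have "c * (1 - a) \<le> t\<^sup>2 * (1 - a)" using big[OF that] a1 by (intro mult_right_mono) auto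
    then have "(a - 1) * t\<^sup>2 + a * (a + 1) \<le> 0" using cc by (simp add: algebra_simps)
    then have "phi t * ((a - 1) * t\<^sup>2 + a * (a + 1)) \<le> 0" using phi_pos[of t] by (simp add: mult_nonneg_nonpos)
    then show ?thesis by (rule divide_nonpos_nonneg) simp
  qed
  have dm_pos: "0 \<le> phi t * ((a - 1) * t\<^sup>2 + a * (a + 1)) / (t\<^sup>2 + a)\<^sup>2" if "- x0 \<le> t" "t \<le> 0" for t
  proof -
    have "t\<^sup>2 * (1 - a) \<le> c * (1 - a)" using small[OF that] a1 by (intro mult_right_mono) auto
    then have "0 \<le> (a - 1) * t\<^sup>2 + a * (a + 1)" using cc by (simp add: algebra_simps)
    then show ?thesis using phi_pos[of t] by simp
  qed
  have mneg: "m t \<le> 0" if "t \<le> - x0" for t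
  proof (rule anti_lim_bot_le[OF that _ mlim])
    fix u v assume "u \<le> v" "v \<le> - x0"
    then show "m v \<le> m u"
      by (intro DERIV_nonpos_imp_nonincreasing[of u v m]) (auto intro!: exI dm dm_neg)
  qed
  have mmono: "m u \<le> m v" if "- x0 \<le> u" "u \<le> v" "v \<le> 0" for u v
    using that by (intro DERIV_nonneg_imp_nondecreasing[of u v m]) (auto intro!: exI dm dm_pos)
  define P where "P = (\<lambda>t. (phi t)\<^sup>2 + t * phi t * Phi t - (2 / pi) * (Phi t)\<^sup>2)"
  have Pm: "(t\<^sup>2 + a) * Phi t + t * phi t = (t\<^sup>2 + a) * m t" for t
    using apos[of t] by (simp add: m_def field_simps)
  have dP: "(P has_real_derivative (- phi t * ((t\<^sup>2 + a) * m t))) (at t)" for t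
  proof -
    have "(P has_real_derivative (- phi t * ((t\<^sup>2 + a) * Phi t + t * phi t))) (at t)"
      unfolding P_def a_def by (rule dP_gen)
    then show ?thesis by (simp only: Pm)
  qed
  have Plim: "(P \<longlongrightarrow> 0) at_bot"
  proof -
    have "((\<lambda>t. (phi t)\<^sup>2 + (t * phi t) * Phi t - (2 / pi) * (Phi t)\<^sup>2) \<longlongrightarrow> 0\<^sup>2 + 0 * 0 - (2/pi) * 0\<^sup>2) at_bot"
      by (intro tendsto_intros Phi_lim_bot phi_lim_bot phi_lim_bot2)
    then show ?thesis by (simp add: P_def)
  qed
  have P0: "P 0 = 0"
    by (simp add: P_def Phi_0 std_normal_density_def power2_eq_square real_sqrt_mult[symmetric])
  have dPpos: "0 \<le> - phi t * ((t\<^sup>2 + a) * m t)" if "m t \<le> 0" for t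
    using that apos[of t] phi_pos[of t] by (simp add: mult_nonneg_nonpos mult_nonpos_nonneg)
  have dPneg: "- phi t * ((t\<^sup>2 + a) * m t) \<le> 0" if "0 \<le> m t" for t
    using that apos[of t] phi_pos[of t] by simp
  have Pbig: "0 \<le> P t" if "t \<le> - x0" for t
  proof (rule mono_lim_bot_ge[OF that _ Plim])
    fix u v assume "u \<le> v" "v \<le> - x0"
    then show "P u \<le> P v"
      by (intro DERIV_nonneg_imp_nondecreasing[of u v P]) (auto intro!: exI dP dPpos mneg)
  qed
  have "0 \<le> P \<theta>"
  proof (cases "\<theta> \<le> - x0")
    case True then show ?thesis by (rule Pbig)
  next
    case False
    show ?thesis
    proof (cases "m \<theta> \<le> 0")
      case True
      have "P (- x0) \<le> P \<theta>"
      proof (rule DERIV_nonneg_imp_nondecreasing[of "- x0" \<theta> P])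
        show "- x0 \<le> \<theta>" using False by simp
        fix s assume s: "- x0 \<le> s" "s \<le> \<theta>"
        have "m s \<le> m \<theta>" by (rule mmono) (use s th in auto)
        then have "m s \<le> 0" using True by simp
        then show "\<exists>y. DERIV P s :> y \<and> 0 \<le> y" using dP dPpos by blast
      qed
      with Pbig[of "- x0"] show ?thesis by simp
    next
      case True2: False
      have "P 0 \<le> P \<theta>"
      proof (rule DERIV_nonpos_imp_nonincreasing[of \<theta> 0 P])
        show "\<theta> \<le> 0" using th by simp
        fix s assume s: "\<theta> \<le> s" "s \<le> 0"
        have "m \<theta> \<le> m s" by (rule mmono) (use s False in auto)
        then have "0 \<le> m s" using True2 by simp
        then show "\<exists>y. DERIV P s :> y \<and> y \<le> 0" using dP dPneg by blast
      qed
      with P0 show ?thesis by simp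
    qed
  qed
  moreover have "gfun \<theta> - 2 / pi = P \<theta> / (Phi \<theta>)\<^sup>2"
    using Phi_pos[of \<theta>] by (simp add: gfun_def P_def field_simps power2_eq_square)
  moreover have "0 \<le> P \<theta> / (Phi \<theta>)\<^sup>2" using calculation(1) by simp
  ultimately show ?thesis by linarith
qed

lemma dot_mat: "x \<bullet> (A *v y) = (transpose A *v x) \<bullet> (y::real^'n::finite)"
  by (simp add: dot_lmul_matrix[symmetric])

lemma sym_dot: "sym_mat A \<Longrightarrow> x \<bullet> (A *v y) = (A *v x) \<bullet> (y::real^'n::finite)"
  unfolding sym_mat_def by (metis dot_mat)

lemma sym_from_dot:
  fixes R :: "real^'n::finite^'n"
  assumes "\<And>x y. x \<bullet> (R *v y) = (R *v x) \<bullet> y"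
  shows "sym_mat R"
proof -
  have "transpose R *v x = R *v x" for x
  proof -
    let ?d = "transpose R *v x - R *v x"
    have "(transpose R *v x) \<bullet> ?d = (R *v x) \<bullet> ?d" using assms[of x ?d] dot_mat[of x R ?d] by simp
    then have "?d \<bullet> ?d = 0" by (simp add: inner_diff_left)
    then show ?thesis by simp
  qed
  then show ?thesis unfolding sym_mat_def by (simp add: matrix_eq)
qed

lemma spectral_sub:
  fixes A :: "real^'n::finite^'n"
  assumes symA: "sym_mat A"
  shows "subspace V \<Longrightarrow> (\<forall>x\<in>V. A *v x \<in> V) \<Longrightarrow>
    \<exists>B. B \<subseteq> V \<and> pairwise orthogonal B \<and> (\<forall>b\<in>B. norm b = 1) \<and> span B = V \<and> (\<forall>b\<in>B. \<exists>c. A *v b = c *\<^sub>R b)"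
proof (induction "dim V" arbitrary: V rule: less_induct)
  case less
  note sV = less.prems(1) and inv = less.prems(2)
  show ?case
  proof (cases "V = {0}")
    case True then show ?thesis by (intro exI[of _ "{}"]) auto
  next
    case False
    then obtain x0 where x0: "x0 \<in> V" "x0 \<noteq> 0" using subspace_0[OF sV] by auto
    let ?K = "V \<inter> sphere 0 1"
    have K: "compact ?K" by (intro closed_Int_compact closed_subspace sV compact_sphere)
    have "x0 /\<^sub>R norm x0 \<in> ?K" using x0 sV by (auto simp: subspace_scale)
    then have Kne: "?K \<noteq> {}" by blast
    have cont: "continuous_on ?K (\<lambda>y. y \<bullet> (A *v y))" by (intro continuous_intros)
    obtain u where u: "u \<in> ?K" and umax: "\<And>y. y \<in> ?K \<Longrightarrow> y \<bullet> (A *v y) \<le> u \<bullet> (A *v u)"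
      using continuous_attains_sup[OF K Kne cont] by blast
    define c where "c = u \<bullet> (A *v u)"
    have uV: "u \<in> V" and un: "norm u = 1" using u by auto
    have uu: "u \<bullet> u = 1" using un by (simp add: dot_square_norm)
    have qle: "y \<bullet> (A *v y) \<le> c * (y \<bullet> y)" if "y \<in> V" for y
    proof (cases "y = 0")
      case True then show ?thesis by simp
    next
      case False
      define z where "z = y /\<^sub>R norm y"
      have "z \<in> ?K" using that False sV by (auto simp: z_def subspace_scale)
      then have "z \<bullet> (A *v z) \<le> c" using umax c_def by blast
      moreover have "z \<bullet> (A *v z) = (y \<bullet> (A *v y)) / (norm y)\<^sup>2"
        by (simp add: z_def matrix_vector_mult_scaleR power2_eq_square divide_inverse)
      ultimately have "y \<bullet> (A *v y) \<le> c * (norm y)\<^sup>2"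
        using False by (simp add: divide_le_eq)
      then show ?thesis by (simp add: dot_square_norm[symmetric] power2_norm_eq_inner)
    qed
    have key: "y \<bullet> (A *v u - c *\<^sub>R u) = 0" if yV: "y \<in> V" for y
    proof -
      define s where "s = y \<bullet> (A *v u - c *\<^sub>R u)"
      define Q where "Q = y \<bullet> (A *v y) - c * (y \<bullet> y)"
      have Q0: "Q \<le> 0" using qle[OF yV] by (simp add: Q_def)
      have ineq: "2 * t * s + t\<^sup>2 * Q \<le> 0" for t
      proof -
        have "u + t *\<^sub>R y \<in> V" using uV yV sV by (simp add: subspace_add subspace_scale)
        then have "(u + t *\<^sub>R y) \<bullet> (A *v (u + t *\<^sub>R y)) \<le> c * ((u + t *\<^sub>R y) \<bullet> (u + t *\<^sub>R y))"
          by (rule qle)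
        moreover have "u \<bullet> (A *v y) = y \<bullet> (A *v u)"
          using sym_dot[OF symA, of u y] by (simp add: inner_commute)
        ultimately show ?thesis
          by (simp add: s_def Q_def c_def algebra_simps inner_add_left inner_add_right matrix_vector_right_distrib
              matrix_vector_mult_scaleR uu inner_commute[of u y] power2_eq_square)
      qed
      define t where "t = s / (1 - Q)"
      have D: "0 < 1 - Q" using Q0 by simp
      have "2 * t * s + t\<^sup>2 * Q \<le> 0" by (rule ineq)
      then have "(1 - Q)\<^sup>2 * (2 * t * s + t\<^sup>2 * Q) \<le> 0"
        by (simp add: mult_nonneg_nonpos)
      moreover have "(1 - Q)\<^sup>2 * (2 * t * s + t\<^sup>2 * Q) = s\<^sup>2 * (2 - Q)"
      proof -
        have tD: "t * (1 - Q) = s" using D by (simp add: t_def)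
        have "(1 - Q)\<^sup>2 * (2 * t * s + t\<^sup>2 * Q) = 2 * (t * (1 - Q)) * s * (1 - Q) + (t * (1 - Q))\<^sup>2 * Q"
          by (simp add: power2_eq_square algebra_simps)
        also have "\<dots> = s\<^sup>2 * (2 - Q)" unfolding tD by (simp add: power2_eq_square algebra_simps)
        finally show ?thesis .
      qed
      ultimately have "s\<^sup>2 * (2 - Q) \<le> 0" by simp
      moreover have "0 < 2 - Q" using Q0 by simp
      ultimately have "s\<^sup>2 \<le> 0" by (simp add: mult_le_0_iff)
      then show ?thesis by (simp add: s_def)
    qed
    have wV: "A *v u - c *\<^sub>R u \<in> V" using inv uV sV by (simp add: subspace_diff subspace_scale)
    have eig: "A *v u = c *\<^sub>R u" using key[OF wV] by simp
    define W where "W = V \<inter> {x. orthogonal u x}"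
    have sW: "subspace W" unfolding W_def by (rule subspace_inter[OF sV Linear_Algebra.subspace_orthogonal_to_vector])
    have invW: "\<forall>x\<in>W. A *v x \<in> W"
    proof
      fix x assume x: "x \<in> W"
      have "u \<bullet> (A *v x) = (A *v u) \<bullet> x" by (rule sym_dot[OF symA])
      also have "\<dots> = 0" using x by (simp add: eig W_def orthogonal_def)
      finally show "A *v x \<in> W" using x inv by (auto simp: W_def orthogonal_def)
    qed
    have WV: "W \<subset> V"
    proof -
      have "u \<notin> W" using uu by (auto simp: W_def orthogonal_def)
      then show ?thesis using uV by (auto simp: W_def)
    qed
    have "dim W < dim V"
      using WV by (intro dim_psubset) (simp add: span_eq_iff[THEN iffD2, OF sW] span_eq_iff[THEN iffD2, OF sV])
    from less.hyps[OF this sW invW] obtain B' where B':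
      "B' \<subseteq> W" "pairwise orthogonal B'" "\<forall>b\<in>B'. norm b = 1" "span B' = W" "\<forall>b\<in>B'. \<exists>c. A *v b = c *\<^sub>R b"
      by blast
    show ?thesis
    proof (intro exI[of _ "insert u B'"] conjI)
      show "insert u B' \<subseteq> V" using B'(1) uV by (auto simp: W_def)
      show "pairwise orthogonal (insert u B')"
        using B'(1,2) by (auto simp: pairwise_insert W_def orthogonal_commute)
      show "\<forall>b\<in>insert u B'. norm b = 1" using B'(3) un by auto
      show "\<forall>b\<in>insert u B'. \<exists>c. A *v b = c *\<^sub>R b" using B'(5) eig by auto
      show "span (insert u B') = V"
      proof
        show "span (insert u B') \<subseteq> V"
          using B'(1) uV sV by (intro span_minimal) (auto simp: W_def)
        show "V \<subseteq> span (insert u B')"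
        proof
          fix x assume x: "x \<in> V"
          have "x - (u \<bullet> x) *\<^sub>R u \<in> W"
            using x uV sV uu by (auto simp: W_def orthogonal_def subspace_diff subspace_scale inner_diff_right)
          then have "x - (u \<bullet> x) *\<^sub>R u \<in> span B'" using B'(4) by simp
          then show "x \<in> span (insert u B')" by (auto simp: span_breakdown_eq)
        qed
      qed
    qed
  qed
qed

lemma spectral:
  fixes A :: "real^'n::finite^'n"
  assumes symA: "sym_mat A"
  obtains B evl where "finite B" "B \<noteq> {}"
    "\<And>b b'. b \<in> B \<Longrightarrow> b' \<in> B \<Longrightarrow> b \<bullet> b' = (if b = b' then 1 else 0)"
    "\<And>x. x = (\<Sum>b\<in>B. (b \<bullet> x) *\<^sub>R b)"
    "\<And>b. b \<in> B \<Longrightarrow> A *v b = evl b *\<^sub>R b"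
proof -
  obtain B where B: "pairwise orthogonal B" "\<forall>b\<in>B. norm b = 1" "span B = UNIV"
      "\<forall>b\<in>B. \<exists>c. A *v b = c *\<^sub>R b"
    using spectral_sub[OF symA, of UNIV] by auto
  define evl where "evl b = (SOME c. A *v b = c *\<^sub>R b)" for b
  have evl: "A *v b = evl b *\<^sub>R b" if "b \<in> B" for b
    using B(4) that unfolding evl_def by (metis (mono_tags) someI_ex)
  have ind: "independent B"
    using B(1,2) by (intro pairwise_orthogonal_independent) auto
  then have fin: "finite B" by (rule finiteI_independent)
  have on: "b \<bullet> b' = (if b = b' then 1 else 0)" if "b \<in> B" "b' \<in> B" for b b'
    using that B(1,2) by (auto simp: pairwise_def orthogonal_def dot_square_norm)
  have exp: "x = (\<Sum>b\<in>B. (b \<bullet> x) *\<^sub>R b)" for x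
  proof -
    have "x \<in> span B" using B(3) by simp
    then obtain u where u: "x = (\<Sum>v\<in>B. u v *\<^sub>R v)" using span_finite[OF fin] by auto
    have "b \<bullet> x = u b" if "b \<in> B" for b
    proof -
      have "b \<bullet> x = (\<Sum>v\<in>B. u v * (b \<bullet> v))" by (simp add: u inner_sum_right)
      also have "\<dots> = (\<Sum>v\<in>B. if v = b then u v else 0)"
        using that by (intro sum.cong) (auto simp: on)
      also have "\<dots> = u b" using fin that by simp
      finally show ?thesis .
    qed
    then show ?thesis by (simp add: u cong: sum.cong)
  qed
  have ne: "B \<noteq> {}"
  proof
    assume "B = {}"
    then have "(1::real^'n) = 0" using exp[of 1] by simp
    then show False by (simp add: vec_eq_iff)
  qed
  show ?thesis by (rule that[OF fin ne on exp evl])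
qed

lemma basis_eq:
  fixes v w :: "real^'n::finite"
  assumes "\<And>x. x = (\<Sum>b\<in>B. (b \<bullet> x) *\<^sub>R b)" "\<And>b. b \<in> B \<Longrightarrow> b \<bullet> v = b \<bullet> w"
  shows "v = w"
  using assms(1)[of v] assms(1)[of w] assms(2) by (metis (no_types, lifting) sum.cong)

lemma quad_expand:
  fixes A :: "real^'n::finite^'n"
  assumes symA: "sym_mat A"
    and exp: "\<And>x. x = (\<Sum>b\<in>B. (b \<bullet> x) *\<^sub>R b)"
    and evl: "\<And>b. b \<in> B \<Longrightarrow> A *v b = evl b *\<^sub>R b"
  shows "y \<bullet> (A *v y) = (\<Sum>b\<in>B. evl b * (b \<bullet> y)\<^sup>2)"
    and "y \<bullet> y = (\<Sum>b\<in>B. (b \<bullet> y)\<^sup>2)"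
proof -
  have "y \<bullet> (A *v y) = (A *v y) \<bullet> (\<Sum>b\<in>B. (b \<bullet> y) *\<^sub>R b)"
    by (subst exp[of y]) (simp add: inner_commute)
  also have "\<dots> = (\<Sum>b\<in>B. (b \<bullet> y) * ((A *v y) \<bullet> b))" by (simp add: inner_sum_right)
  also have "\<dots> = (\<Sum>b\<in>B. evl b * (b \<bullet> y)\<^sup>2)"
  proof (intro sum.cong refl)
    fix b assume b: "b \<in> B"
    have "(A *v y) \<bullet> b = y \<bullet> (A *v b)" using sym_dot[OF symA, of y b] by simp
    also have "\<dots> = evl b * (b \<bullet> y)" using b by (simp add: evl inner_commute)
    finally show "(b \<bullet> y) * ((A *v y) \<bullet> b) = evl b * (b \<bullet> y)\<^sup>2" by (simp add: power2_eq_square)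
  qed
  finally show "y \<bullet> (A *v y) = (\<Sum>b\<in>B. evl b * (b \<bullet> y)\<^sup>2)" .
  have "y \<bullet> y = y \<bullet> (\<Sum>b\<in>B. (b \<bullet> y) *\<^sub>R b)" by (subst exp[of y]) simp
  also have "\<dots> = (\<Sum>b\<in>B. (b \<bullet> y)\<^sup>2)" by (simp add: inner_sum_right power2_eq_square inner_commute)
  finally show "y \<bullet> y = (\<Sum>b\<in>B. (b \<bullet> y)\<^sup>2)" .
qed

lemma eigenvalues_eq:
  fixes A :: "real^'n::finite^'n"
  assumes symA: "sym_mat A"
    and on: "\<And>b b'. b \<in> B \<Longrightarrow> b' \<in> B \<Longrightarrow> b \<bullet> b' = (if b = b' then 1 else 0)"
    and exp: "\<And>x. x = (\<Sum>b\<in>B. (b \<bullet> x) *\<^sub>R b)"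
    and evl: "\<And>b. b \<in> B \<Longrightarrow> A *v b = evl b *\<^sub>R b"
  shows "eigenvalues A = evl ` B"
proof
  show "eigenvalues A \<subseteq> evl ` B"
  proof
    fix c assume "c \<in> eigenvalues A"
    then obtain x where x: "x \<noteq> 0" "A *v x = c *\<^sub>R x" by (auto simp: eigenvalues_def)
    have "\<exists>b\<in>B. b \<bullet> x \<noteq> 0"
    proof (rule ccontr)
      assume "\<not> ?thesis"
      then have "x = 0" using exp[of x] by simp
      with x show False by simp
    qed
    then obtain b where b: "b \<in> B" "b \<bullet> x \<noteq> 0" by blast
    have "c * (b \<bullet> x) = b \<bullet> (A *v x)" using x by simp
    also have "\<dots> = (A *v b) \<bullet> x" by (rule sym_dot[OF symA])
    also have "\<dots> = evl b * (b \<bullet> x)" using b by (simp add: evl)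
    finally have "c = evl b" using b by simp
    then show "c \<in> evl ` B" using b by blast
  qed
  show "evl ` B \<subseteq> eigenvalues A"
  proof
    fix c assume "c \<in> evl ` B"
    then obtain b where b: "b \<in> B" "c = evl b" by blast
    have "b \<noteq> 0" using on[OF b(1) b(1)] by auto
    then show "c \<in> eigenvalues A" using b evl by (auto simp: eigenvalues_def)
  qed
qed

lemma rayleigh_max:
  fixes A :: "real^'n::finite^'n"
  assumes symA: "sym_mat A"
  shows "y \<bullet> (A *v y) \<le> lambda_max A * (y \<bullet> y)"
proof -
  obtain B evl where fin: "finite B" and ne: "B \<noteq> {}"
    and on: "\<And>b b'. b \<in> B \<Longrightarrow> b' \<in> B \<Longrightarrow> b \<bullet> b' = (if b = b' then 1 else 0)"
    and exp: "\<And>x. x = (\<Sum>b\<in>B. (b \<bullet> x) *\<^sub>R b)"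
    and evl: "\<And>b. b \<in> B \<Longrightarrow> A *v b = evl b *\<^sub>R b"
    using spectral[OF symA] by blast
  have E: "eigenvalues A = evl ` B" by (rule eigenvalues_eq[OF symA on exp evl])
  have le: "evl b \<le> lambda_max A" if "b \<in> B" for b
    unfolding lambda_max_def E using fin that by (intro Max_ge) auto
  have "y \<bullet> (A *v y) = (\<Sum>b\<in>B. evl b * (b \<bullet> y)\<^sup>2)" by (rule quad_expand(1)[OF symA exp evl])
  also have "\<dots> \<le> (\<Sum>b\<in>B. lambda_max A * (b \<bullet> y)\<^sup>2)"
    by (intro sum_mono mult_right_mono le) auto
  also have "\<dots> = lambda_max A * (y \<bullet> y)"
    by (simp add: quad_expand(2)[OF symA exp evl] sum_distrib_left)
  finally show ?thesis .
qed

lemma rayleigh_min: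
  fixes A :: "real^'n::finite^'n"
  assumes symA: "sym_mat A"
  shows "lambda_min A * (y \<bullet> y) \<le> y \<bullet> (A *v y)"
proof -
  obtain B evl where fin: "finite B" and ne: "B \<noteq> {}"
    and on: "\<And>b b'. b \<in> B \<Longrightarrow> b' \<in> B \<Longrightarrow> b \<bullet> b' = (if b = b' then 1 else 0)"
    and exp: "\<And>x. x = (\<Sum>b\<in>B. (b \<bullet> x) *\<^sub>R b)"
    and evl: "\<And>b. b \<in> B \<Longrightarrow> A *v b = evl b *\<^sub>R b"
    using spectral[OF symA] by blast
  have E: "eigenvalues A = evl ` B" by (rule eigenvalues_eq[OF symA on exp evl])
  have le: "lambda_min A \<le> evl b" if "b \<in> B" for b
    unfolding lambda_min_def E using fin that by (intro Min_le) auto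
  have "lambda_min A * (y \<bullet> y) = (\<Sum>b\<in>B. lambda_min A * (b \<bullet> y)\<^sup>2)"
    by (simp add: quad_expand(2)[OF symA exp evl] sum_distrib_left)
  also have "\<dots> \<le> (\<Sum>b\<in>B. evl b * (b \<bullet> y)\<^sup>2)"
    by (intro sum_mono mult_right_mono le) auto
  also have "\<dots> = y \<bullet> (A *v y)" by (rule quad_expand(1)[OF symA exp evl, symmetric])
  finally show ?thesis .
qed

lemma outer_mv: "outer b c *v x = (c \<bullet> x) *\<^sub>R (b::real^'n::finite)"
  by (simp add: vec_eq_iff matrix_vector_mult_def outer_def inner_vec_def sum_distrib_left mult_ac)

lemma sum_mv: "finite S \<Longrightarrow> (\<Sum>b\<in>S. M b) *v x = (\<Sum>b\<in>S. M b *v x)"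
  by (induct S rule: finite_induct) (simp_all add: matrix_vector_mult_add_rdistrib)

lemma psd_sym: "psd A \<Longrightarrow> sym_mat A" by (simp add: psd_def)

lemma sqrt_exists:
  fixes S :: "real^'n::finite^'n"
  assumes pS: "psd S"
  shows "\<exists>R. psd R \<and> R ** R = S"
proof -
  have symS: "sym_mat S" using pS by (simp add: psd_def)
  obtain B evl where fin: "finite B" and ne: "B \<noteq> {}"
    and on: "\<And>b b'. b \<in> B \<Longrightarrow> b' \<in> B \<Longrightarrow> b \<bullet> b' = (if b = b' then 1 else 0)"
    and exp: "\<And>x. x = (\<Sum>b\<in>B. (b \<bullet> x) *\<^sub>R b)"
    and ev: "\<And>b. b \<in> B \<Longrightarrow> S *v b = evl b *\<^sub>R b"
    using spectral[OF symS] by blast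
  have ev0: "0 \<le> evl b" if "b \<in> B" for b
  proof -
    have "0 \<le> b \<bullet> (S *v b)" using pS by (simp add: psd_def)
    also have "\<dots> = evl b" using that ev on[OF that that] by simp
    finally show ?thesis .
  qed
  define R where "R = (\<Sum>b\<in>B. sqrt (evl b) *\<^sub>R outer b b)"
  have Rv: "R *v x = (\<Sum>b\<in>B. (sqrt (evl b) * (b \<bullet> x)) *\<^sub>R b)" for x
    unfolding R_def by (simp add: sum_mv[OF fin] scaleR_matrix_vector_assoc[symmetric] outer_mv)
  have Rb: "R *v b = sqrt (evl b) *\<^sub>R b" if b: "b \<in> B" for b
  proof -
    have "R *v b = (\<Sum>b'\<in>B. if b' = b then sqrt (evl b) *\<^sub>R b else 0)"
      unfolding Rv using b by (intro sum.cong) (auto simp: on)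
    also have "\<dots> = sqrt (evl b) *\<^sub>R b" using fin b by simp
    finally show ?thesis .
  qed
  have Rdot: "x \<bullet> (R *v y) = (\<Sum>b\<in>B. sqrt (evl b) * (b \<bullet> y) * (b \<bullet> x))" for x y
    by (simp add: Rv inner_sum_right inner_commute)
  have symR: "sym_mat R"
  proof (rule sym_from_dot)
    fix x y
    have "(R *v x) \<bullet> y = y \<bullet> (R *v x)" by (simp add: inner_commute)
    then show "x \<bullet> (R *v y) = (R *v x) \<bullet> y" by (simp add: Rdot mult_ac)
  qed
  have pR: "psd R"
    unfolding psd_def
  proof (intro conjI allI symR)
    fix x
    show "0 \<le> x \<bullet> (R *v x)" unfolding Rdot
      by (intro sum_nonneg) (auto simp: ev0 mult.assoc)
  qed
  have "R ** R = S"
    unfolding matrix_eq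
  proof
    fix x
    show "(R ** R) *v x = S *v x"
      unfolding matrix_vector_mul_assoc[symmetric]
    proof (rule basis_eq[OF exp])
      fix b assume b: "b \<in> B"
      have "b \<bullet> (R *v (R *v x)) = (R *v b) \<bullet> (R *v x)" by (rule sym_dot[OF symR])
      also have "\<dots> = sqrt (evl b) * (b \<bullet> (R *v x))" using b by (simp add: Rb)
      also have "b \<bullet> (R *v x) = (R *v b) \<bullet> x" by (rule sym_dot[OF symR])
      also have "\<dots> = sqrt (evl b) * (b \<bullet> x)" using b by (simp add: Rb)
      finally have 1: "b \<bullet> (R *v (R *v x)) = evl b * (b \<bullet> x)"
        using ev0[OF b] by (simp add: mult.assoc[symmetric])
      have "b \<bullet> (S *v x) = (S *v b) \<bullet> x" by (rule sym_dot[OF symS])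
      also have "\<dots> = evl b * (b \<bullet> x)" using b by (simp add: ev)
      finally show "b \<bullet> (R *v (R *v x)) = b \<bullet> (S *v x)" using 1 by simp
    qed
  qed
  with pR show ?thesis by blast
qed

lemma sqrt_unique:
  fixes R1 R2 :: "real^'n::finite^'n"
  assumes p1: "psd R1" and p2: "psd R2" and eq: "R1 ** R1 = R2 ** R2"
  shows "R1 = R2"
proof -
  have sym1: "sym_mat R1" and sym2: "sym_mat R2" using p1 p2 by (simp_all add: psd_def)
  obtain B evl where fin: "finite B" and ne: "B \<noteq> {}"
    and on: "\<And>b b'. b \<in> B \<Longrightarrow> b' \<in> B \<Longrightarrow> b \<bullet> b' = (if b = b' then 1 else 0)"
    and exp: "\<And>x. x = (\<Sum>b\<in>B. (b \<bullet> x) *\<^sub>R b)"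
    and ev: "\<And>b. b \<in> B \<Longrightarrow> R1 *v b = evl b *\<^sub>R b"
    using spectral[OF sym1] by blast
  have R2b: "R2 *v b = evl b *\<^sub>R b" if b: "b \<in> B" for b
  proof -
    define a where "a = evl b"
    have a0: "0 \<le> a"
    proof -
      have "0 \<le> b \<bullet> (R1 *v b)" using p1 by (simp add: psd_def)
      also have "\<dots> = a" using b ev on[OF b b] by (simp add: a_def)
      finally show ?thesis .
    qed
    define w where "w = R2 *v b - a *\<^sub>R b"
    have "R2 *v (R2 *v b) = R1 *v (R1 *v b)"
      by (simp add: matrix_vector_mul_assoc eq)
    also have "\<dots> = (a * a) *\<^sub>R b" using b by (simp add: ev a_def matrix_vector_mult_scaleR)
    finally have RR: "R2 *v (R2 *v b) = (a * a) *\<^sub>R b" .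
    have W: "R2 *v w + a *\<^sub>R w = 0"
      by (simp add: w_def matrix_vector_mult_diff_distrib matrix_vector_mult_scaleR RR algebra_simps)
    have "w = 0"
    proof (cases "a = 0")
      case True
      then have Rw: "R2 *v w = 0" using W by simp
      have "w = R2 *v b" using True by (simp add: w_def)
      then have "w \<bullet> w = (R2 *v b) \<bullet> w" by simp
      also have "\<dots> = b \<bullet> (R2 *v w)" by (simp add: sym_dot[OF sym2])
      also have "\<dots> = 0" by (simp add: Rw)
      finally show ?thesis by simp
    next
      case False
      then have apos: "0 < a" using a0 by simp
      have "0 = w \<bullet> (R2 *v w + a *\<^sub>R w)" using W by simp
      also have "\<dots> = w \<bullet> (R2 *v w) + a * (w \<bullet> w)" by (simp add: inner_add_right)
      finally have "a * (w \<bullet> w) \<le> 0" using p2 unfolding psd_def by (smt (verit))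
      then have "w \<bullet> w \<le> 0" using apos by (simp add: mult_le_0_iff)
      then show ?thesis by (metis inner_eq_zero_iff inner_ge_zero order_antisym)
    qed
    then show ?thesis by (simp add: w_def a_def)
  qed
  show ?thesis
    unfolding matrix_eq
  proof
    fix x
    show "R1 *v x = R2 *v x"
    proof (rule basis_eq[OF exp])
      fix b assume b: "b \<in> B"
      have "b \<bullet> (R1 *v x) = (R1 *v b) \<bullet> x" by (rule sym_dot[OF sym1])
      also have "\<dots> = (R2 *v b) \<bullet> x" using b by (simp add: ev R2b)
      also have "\<dots> = b \<bullet> (R2 *v x)" by (rule sym_dot[OF sym2, symmetric])
      finally show "b \<bullet> (R1 *v x) = b \<bullet> (R2 *v x)" .
    qed
  qed
qed

lemma mat_sqrt_props:
  fixes S :: "real^'n::finite^'n"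
  assumes "psd S"
  shows "psd (mat_sqrt S)" "mat_sqrt S ** mat_sqrt S = S"
proof -
  have "\<exists>!R. psd R \<and> R ** R = S"
    using sqrt_exists[OF assms] sqrt_unique by blast
  then have "psd (mat_sqrt S) \<and> mat_sqrt S ** mat_sqrt S = S"
    unfolding mat_sqrt_def by (rule theI')
  then show "psd (mat_sqrt S)" "mat_sqrt S ** mat_sqrt S = S" by auto
qed

lemma isqrt_props:
  fixes S :: "real^'n::finite^'n"
  assumes pd: "pd S"
  shows "mat_isqrt S ** mat_sqrt S = mat 1" "mat_sqrt S ** mat_isqrt S = mat 1"
    "sym_mat (mat_isqrt S)" "sym_mat (mat_sqrt S)"
proof -
  have pS: "psd S" using pd unfolding pd_def psd_def by (metis inner_zero_left less_imp_le order_refl)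
  note R = mat_sqrt_props[OF pS]
  let ?R = "mat_sqrt S"
  have ker: "\<forall>x. ?R *v x = 0 \<longrightarrow> x = 0"
  proof (intro allI impI)
    fix x assume "?R *v x = 0"
    then have "S *v x = 0" using R(2) by (metis matrix_vector_mul_assoc matrix_vector_mult_0_right)
    then have "x \<bullet> (S *v x) = 0" by simp
    then show "x = 0" using pd unfolding pd_def by force
  qed
  then have "invertible ?R"
    using matrix_left_invertible_ker invertible_left_inverse by blast
  then have inv: "?R ** mat_isqrt S = mat 1 \<and> mat_isqrt S ** ?R = mat 1"
    unfolding mat_isqrt_def matrix_inv_def invertible_def by (rule someI_ex)
  then show 1: "mat_isqrt S ** ?R = mat 1" and 2: "?R ** mat_isqrt S = mat 1" by auto
  show symR: "sym_mat ?R" using R(1) by (simp add: psd_def)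
  show "sym_mat (mat_isqrt S)"
  proof -
    let ?T = "mat_isqrt S"
    have "transpose ?T ** ?R = mat 1"
      using symR 2 unfolding sym_mat_def by (metis matrix_transpose_mul transpose_mat)
    then have "transpose ?T = transpose ?T ** (?R ** ?T)" using 2 by simp
    also have "\<dots> = ?T" using \<open>transpose ?T ** ?R = mat 1\<close> by (simp add: matrix_mul_assoc)
    finally show ?thesis by (simp add: sym_mat_def)
  qed
qed

lemma open_pos_measure:
  fixes A :: "'a::euclidean_space set"
  assumes "open A" "x \<in> A" shows "0 < emeasure lborel A"
proof -
  obtain a b where ab: "box a b \<subseteq> A" "x \<in> box a b" "\<forall>i\<in>Basis. a \<bullet> i < b \<bullet> i"
    using open_contains_box[OF assms] by blast
  have "0 < emeasure lborel (box a b)"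
    using ab(3) unfolding emeasure_lborel_box_eq by (force intro!: prod_pos simp: algebra_simps)
  also have "\<dots> \<le> emeasure lborel A" using ab(1) assms(1) by (intro emeasure_mono) auto
  finally show ?thesis .
qed

lemma lborel_shift:
  fixes g :: "'a::euclidean_space \<Rightarrow> real"
  assumes [measurable]: "g \<in> borel_measurable borel"
  shows "(\<integral>x. g (c + x) \<partial>lborel) = (\<integral>x. g x \<partial>lborel)"
proof -
  have "(\<integral>x. g x \<partial>lborel) = (\<integral>x. g x \<partial>distr lborel borel ((+) c))" by (simp add: lborel_distr_plus)
  also have "\<dots> = (\<integral>x. g (c + x) \<partial>lborel)" by (rule integral_distr) auto
  finally show ?thesis by simp
qed

lemma proper_inj:
  fixes X :: "real^'p::finite^'n::finite" and Y :: "'n \<Rightarrow> nat"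
  assumes Y01: "\<forall>i. Y i \<in> {0,1}" and int: "integrable lborel (post X Y 0 v)" and Xw: "X *v w = 0"
  shows "w = 0"
proof (rule ccontr)
  assume w0: "w \<noteq> 0"
  define f where "f = post X Y 0 v"
  have fpos: "0 < f \<beta>" for \<beta>
  proof -
    have "0 < Phi (X $ i \<bullet> \<beta>) ^ Y i * (1 - Phi (X $ i \<bullet> \<beta>)) ^ (1 - Y i)" for i
      using Phi_pos Phi_less1 by (intro mult_pos_pos zero_less_power) (auto simp: less_imp_le)
    then show ?thesis unfolding f_def post_def prior_def by (simp add: prod_pos)
  qed
  have Xi: "X $ i \<bullet> w = 0" for i
    using arg_cong[OF Xw, of "\<lambda>z. z $ i"] by (simp add: matrix_vector_mul_component)
  have fshift: "f (w + \<beta>) = f \<beta>" for \<beta>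
    unfolding f_def post_def prior_def using Xi by (simp add: inner_add_right)
  have intf: "integrable lborel f" using int by (simp add: f_def)
  have fm[measurable]: "f \<in> borel_measurable borel"
    using borel_measurable_integrable[OF intf] by simp
  have ww: "0 < w \<bullet> w" using w0 by simp
  define h where "h \<beta> = (\<beta> \<bullet> w) / (w \<bullet> w)" for \<beta>
  have hshift: "h (w + \<beta>) = h \<beta> + 1" for \<beta>
    using ww by (simp add: h_def inner_add_left field_simps)
  have hcont: "continuous_on UNIV h" unfolding h_def using ww by (intro continuous_intros) auto
  have hm[measurable]: "h \<in> borel_measurable borel" unfolding h_def by measurable
  define Sl where "Sl k = {\<beta>. real k \<le> h \<beta> \<and> h \<beta> < real k + 1}" for k :: nat
  have Slm[measurable]: "Sl k \<in> sets borel" for k unfolding Sl_def by measurable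
  define U where "U N = {\<beta>. 0 \<le> h \<beta> \<and> h \<beta> < real N}" for N :: nat
  have Um[measurable]: "U N \<in> sets borel" for N unfolding U_def by measurable
  have intI: "integrable lborel (\<lambda>\<beta>. indicator A \<beta> * f \<beta>)" if "A \<in> sets borel" for A
    using integrable_mult_indicator[of A lborel f] that intf by simp
  define c where "c k = (\<integral>\<beta>. indicator (Sl k) \<beta> * f \<beta> \<partial>lborel)" for k
  have cshift: "c (Suc k) = c k" for k
  proof -
    have "c (Suc k) = (\<integral>\<beta>. indicator (Sl (Suc k)) (w + \<beta>) * f (w + \<beta>) \<partial>lborel)"
      unfolding c_def by (rule lborel_shift[symmetric]) measurable
    also have "\<dots> = c k"
      unfolding c_def by (intro Bochner_Integration.integral_cong refl)
        (auto simp: fshift Sl_def hshift indicator_def)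
    finally show ?thesis .
  qed
  have cconst: "c k = c 0" for k by (induct k) (simp_all add: cshift)
  have cU: "(\<integral>\<beta>. indicator (U N) \<beta> * f \<beta> \<partial>lborel) = real N * c 0" for N
  proof (induct N)
    case 0 then show ?case by (simp add: U_def)
  next
    case (Suc N)
    have "(\<lambda>\<beta>. indicator (U (Suc N)) \<beta> * f \<beta>) = (\<lambda>\<beta>. indicator (U N) \<beta> * f \<beta> + indicator (Sl N) \<beta> * f \<beta>)"
      by (rule ext) (auto simp: U_def Sl_def indicator_def)
    then have "(\<integral>\<beta>. indicator (U (Suc N)) \<beta> * f \<beta> \<partial>lborel)
        = (\<integral>\<beta>. indicator (U N) \<beta> * f \<beta> \<partial>lborel) + (\<integral>\<beta>. indicator (Sl N) \<beta> * f \<beta> \<partial>lborel)"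
      by (simp add: Bochner_Integration.integral_add intI)
    then show ?case using Suc cconst[of N] by (simp add: c_def algebra_simps)
  qed
  have bound: "real N * c 0 \<le> (\<integral>\<beta>. f \<beta> \<partial>lborel)" for N
    unfolding cU[symmetric]
    by (rule integral_mono[OF intI intf]) (auto simp: indicator_def less_imp_le[OF fpos])
  have c0pos: "0 < c 0"
  proof -
    have nn: "0 \<le> c 0" unfolding c_def
      by (rule integral_nonneg_AE) (auto simp: indicator_def less_imp_le[OF fpos])
    have "c 0 \<noteq> 0"
    proof
      assume "c 0 = 0"
      then have "AE \<beta> in lborel. indicator (Sl 0) \<beta> * f \<beta> = 0"
        unfolding c_def using integral_nonneg_eq_0_iff_AE[OF intI[OF Slm[of 0]]]
        by (simp add: indicator_def less_imp_le[OF fpos])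
      then have "emeasure lborel (Sl 0) = 0"
        by (subst (asm) AE_iff_measurable[of "Sl 0"]) (auto simp: indicator_def fpos[THEN less_imp_neq, symmetric])
      moreover have "0 < emeasure lborel (Sl 0)"
      proof -
        let ?O = "{\<beta>. 0 < h \<beta> \<and> h \<beta> < 1}"
        have "open ?O" using hcont by (intro open_Collect_conj open_Collect_less continuous_intros) auto
        moreover have "w /\<^sub>R 2 \<in> ?O" using ww by (simp add: h_def)
        ultimately have "0 < emeasure lborel ?O" by (rule open_pos_measure)
        also have "\<dots> \<le> emeasure lborel (Sl 0)"
          by (intro emeasure_mono) (auto simp: Sl_def)
        finally show ?thesis .
      qed
      ultimately show False by simp
    qed
    with nn show ?thesis by simp
  qed
  obtain N :: nat where "(\<integral>\<beta>. f \<beta> \<partial>lborel) / c 0 < real N" using reals_Archimedean2 by blast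
  then have "(\<integral>\<beta>. f \<beta> \<partial>lborel) < real N * c 0" using c0pos by (simp add: divide_less_eq)
  with bound[of N] show False by simp
qed

lemma tr_dot: "x \<bullet> (transpose X *v w) = (X *v x) \<bullet> (w::real^'n::finite)"
  using dot_mat[of x "transpose X" w] by (simp only: transpose_transpose)

lemma XtX_dot: fixes X :: "real^'p::finite^'n::finite" shows "x \<bullet> ((transpose X ** X) *v y) = (\<Sum>i\<in>UNIV. (X$i \<bullet> x) * (X$i \<bullet> y))"
proof -
  have "x \<bullet> ((transpose X ** X) *v y) = (X *v x) \<bullet> (X *v y)"
    unfolding matrix_vector_mul_assoc[symmetric] by (rule tr_dot)
  then show ?thesis by (simp add: inner_vec_def matrix_vector_mul_component)
qed

lemma XDX_dot: "x \<bullet> (transpose X ** diag_mat d ** X *v y) = (\<Sum>i\<in>UNIV. d i * (X$i \<bullet> x) * (X$i \<bullet> y))"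
proof -
  have H1: "x \<bullet> (transpose X ** diag_mat d ** X *v y) = (X *v x) \<bullet> (diag_mat d *v (X *v y))"
    unfolding matrix_vector_mul_assoc[symmetric] by (rule tr_dot)
  have H2: "(diag_mat d *v z) $ i = d i * z $ i" for z i
  proof -
    have "(diag_mat d *v z) $ i = (\<Sum>j\<in>UNIV. (if i = j then d i else 0) * z $ j)"
      by (simp add: diag_mat_def matrix_vector_mult_def)
    also have "\<dots> = (\<Sum>j\<in>UNIV. if i = j then d i * z $ j else 0)" by (intro sum.cong) auto
    also have "\<dots> = d i * z $ i" by simp
    finally show ?thesis .
  qed
  have "(X *v x) \<bullet> (diag_mat d *v (X *v y)) = (\<Sum>i\<in>UNIV. (X *v x)$i * (diag_mat d *v (X *v y))$i)"
    by (simp only: inner_vec_def inner_real_def)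
  also have "\<dots> = (\<Sum>i\<in>UNIV. (X$i \<bullet> x) * (d i * (X$i \<bullet> y)))"
    by (simp only: H2, simp only: matrix_vector_mul_component)
  also have "\<dots> = (\<Sum>i\<in>UNIV. d i * (X$i \<bullet> x) * (X$i \<bullet> y))" by (simp add: mult_ac)
  finally show ?thesis using H1 by simp
qed

lemma sum_filter_UNIV: "(\<Sum>i\<in>{i. P i}. f i) = (\<Sum>i\<in>(UNIV::'a::finite set). if P i then f i else 0)"
  using sum.inter_filter[of "UNIV::'a set" f P] by simp

lemma W_dot: "x \<bullet> (Wmat X Y S *v y) = (\<Sum>i\<in>UNIV.
   ((if X$i \<in> S \<and> Y i = 0 then 1 else 0) + (if X$i \<in> uminus ` S \<and> Y i = 1 then 1 else 0)) * (X$i \<bullet> x) * (X$i \<bullet> y))"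
proof -
  have "x \<bullet> (Wmat X Y S *v y) =
     (\<Sum>i\<in>{i. X $ i \<in> S}. (if Y i = 0 then 1 else 0) * (X$i \<bullet> x) * (X$i \<bullet> y)) +
     (\<Sum>i\<in>{i. X $ i \<in> uminus ` S}. (if Y i = 1 then 1 else 0) * (X$i \<bullet> x) * (X$i \<bullet> y))"
    unfolding Wmat_def
    by (simp add: matrix_vector_mult_add_rdistrib sum_mv scaleR_matrix_vector_assoc[symmetric] outer_mv
        inner_add_right inner_sum_right mult_ac inner_commute)
  also have "\<dots> = (\<Sum>i\<in>UNIV. (if X$i \<in> S \<and> Y i = 0 then 1 else 0) * (X$i \<bullet> x) * (X$i \<bullet> y)) +
     (\<Sum>i\<in>UNIV. (if X$i \<in> uminus ` S \<and> Y i = 1 then 1 else 0) * (X$i \<bullet> x) * (X$i \<bullet> y))"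
    unfolding sum_filter_UNIV by (intro arg_cong2[where f="(+)"] sum.cong) auto
  also have "\<dots> = (\<Sum>i\<in>UNIV.
   ((if X$i \<in> S \<and> Y i = 0 then 1 else 0) + (if X$i \<in> uminus ` S \<and> Y i = 1 then 1 else 0)) * (X$i \<bullet> x) * (X$i \<bullet> y))"
    by (simp add: sum.distrib[symmetric] algebra_simps)
  finally show ?thesis .
qed

lemma conj_dot: "sym_mat T \<Longrightarrow> x \<bullet> (T ** M ** T *v y) = (T *v x) \<bullet> (M *v (T *v (y::real^'n::finite)))"
  by (simp add: matrix_vector_mul_assoc[symmetric] sym_dot)

lemma wCS:
  fixes d p q :: "'n::finite \<Rightarrow> real"
  assumes "\<And>i. 0 \<le> d i"
  shows "(\<Sum>i\<in>UNIV. d i * p i * q i)\<^sup>2 \<le> (\<Sum>i\<in>UNIV. d i * p i * p i) * (\<Sum>i\<in>UNIV. d i * q i * q i)"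
proof -
  define P where "P = (\<chi> i. sqrt (d i) * p i)"
  define Qv where "Qv = (\<chi> i. sqrt (d i) * q i)"
  have sq: "sqrt (d i) * a * (sqrt (d i) * b) = d i * a * b" for i a b
  proof -
    have "sqrt (d i) * a * (sqrt (d i) * b) = (sqrt (d i) * sqrt (d i)) * a * b" by (simp add: mult_ac)
    also have "\<dots> = d i * a * b" using assms[of i] by simp
    finally show ?thesis .
  qed
  have "(P \<bullet> Qv)\<^sup>2 \<le> (P \<bullet> P) * (Qv \<bullet> Qv)" by (rule Cauchy_Schwarz_ineq)
  then show ?thesis by (simp add: P_def Qv_def inner_vec_def sq)
qed

lemma orth_dot:
  assumes "z \<in> orthant (\<lambda>k. 0 \<le> \<beta> $ k)"
  shows "0 \<le> z \<bullet> (\<beta>::real^'p::finite)"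
proof -
  have "0 \<le> z $ k * \<beta> $ k" for k
    using assms[unfolded orthant_def] by (cases "0 \<le> \<beta> $ k") (auto intro: mult_nonneg_nonneg mult_nonpos_nonpos elim!: allE[of _ k])
  then show ?thesis by (simp add: inner_vec_def sum_nonneg)
qed

theorem proposition8:
  fixes X :: "real^'p::finite^'n::finite"
    and Y :: "'n \<Rightarrow> nat"
    and Q :: "real^'p^'p"
    and v :: "real^'p"
    and Bhat :: "real^'p"
  assumes Y01: "\<forall>i. Y i \<in> {0, 1}"
    and Qcond: "pd Q \<or> Q = 0"
    and proper: "integrable lborel (post X Y Q v)"
    and mode: "\<forall>\<beta>. post X Y Q v \<beta> \<le> post X Y Q v Bhat"
  defines "\<Sigma> \<equiv> transpose X ** X + Q"
  defines "lam \<equiv> (SUP t\<in>{0<..<1::real}. SUP \<alpha>\<in>{\<alpha>::real^'p. \<alpha> \<noteq> 0}.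
                    (norm (mat_isqrt \<Sigma> *v (transpose X ** Dmat X Y (Bhat + t *\<^sub>R \<alpha>) ** X *v \<alpha>)))\<^sup>2
                    / (norm (mat_sqrt \<Sigma> *v \<alpha>))\<^sup>2)"
  shows "sqrt lam \<le> lambda_max (mat_isqrt \<Sigma> ** (transpose X ** X) ** mat_isqrt \<Sigma>)
           - (2 / pi) * (MIN s\<in>(UNIV :: ('p \<Rightarrow> bool) set).
                 lambda_min (mat_isqrt \<Sigma> ** Wmat X Y (orthant s) ** mat_isqrt \<Sigma>))"
proof -
  have Qsym: "sym_mat Q" using Qcond by (auto simp: pd_def sym_mat_def transpose_def vec_eq_iff)
  have Qnn: "0 \<le> x \<bullet> (Q *v x)" for x
  proof (cases "x = 0")
    case False then show ?thesis using Qcond unfolding pd_def by (auto intro: less_imp_le)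
  qed simp
  have Sdot: "x \<bullet> (\<Sigma> *v y) = (\<Sum>i\<in>UNIV. (X$i \<bullet> x) * (X$i \<bullet> y)) + x \<bullet> (Q *v y)" for x y
    by (simp add: \<Sigma>_def matrix_vector_mult_add_rdistrib inner_add_right XtX_dot)
  have pdS: "pd \<Sigma>"
    unfolding pd_def
  proof (intro conjI allI impI)
    show "sym_mat \<Sigma>"
    proof (rule sym_from_dot)
      fix x y
      have e1: "x \<bullet> (Q *v y) = y \<bullet> (Q *v x)" using sym_dot[OF Qsym, of x y] by (metis inner_commute)
      have "x \<bullet> (\<Sigma> *v y) = y \<bullet> (\<Sigma> *v x)" unfolding Sdot e1 by (simp add: mult.commute)
      then show "x \<bullet> (\<Sigma> *v y) = (\<Sigma> *v x) \<bullet> y" by (metis inner_commute)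
    qed
    fix x :: "real^'p" assume x0: "x \<noteq> 0"
    have sq: "(\<Sum>i\<in>UNIV. (X$i \<bullet> x) * (X$i \<bullet> x)) = (X *v x) \<bullet> (X *v x)"
      by (simp add: inner_vec_def matrix_vector_mul_component)
    show "0 < x \<bullet> (\<Sigma> *v x)"
    proof (cases "pd Q")
      case True
      then have "0 < x \<bullet> (Q *v x)" using x0 by (simp add: pd_def)
      moreover have "0 \<le> (\<Sum>i\<in>UNIV. (X$i \<bullet> x) * (X$i \<bullet> x))" by (intro sum_nonneg) auto
      ultimately show ?thesis by (simp add: Sdot)
    next
      case False
      then have Q0: "Q = 0" using Qcond by simp
      have "X *v x \<noteq> 0"
        using proper_inj[OF Y01, of X v x] proper x0 Q0 by auto
      then have "0 < (X *v x) \<bullet> (X *v x)" by simp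
      then show ?thesis by (simp add: Sdot sq Q0)
    qed
  qed
  define T where "T = mat_isqrt \<Sigma>"
  define S where "S = mat_sqrt \<Sigma>"
  have TS: "T ** S = mat 1" and ST: "S ** T = mat 1" and symT: "sym_mat T"
    using isqrt_props[OF pdS] by (simp_all add: T_def S_def)
  define K where "K = transpose X ** X"
  define A where "A = T ** K ** T"
  define Bm where "Bm s = T ** Wmat X Y (orthant s) ** T" for s
  define mB where "mB = (MIN s\<in>(UNIV :: ('p \<Rightarrow> bool) set). lambda_min (Bm s))"
  define c where "c = lambda_max A - (2 / pi) * mB"
  have Adot: "x \<bullet> (A *v y) = (\<Sum>i\<in>UNIV. (X$i \<bullet> (T *v x)) * (X$i \<bullet> (T *v y)))" for x y
    unfolding A_def K_def by (simp add: conj_dot[OF symT] XtX_dot)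
  define wg where "wg s i = ((if X$i \<in> orthant s \<and> Y i = 0 then 1 else 0)
      + (if X$i \<in> uminus ` orthant s \<and> Y i = 1 then 1 else 0) :: real)" for s i
  have Bdot: "x \<bullet> (Bm s *v y) = (\<Sum>i\<in>UNIV. wg s i * (X$i \<bullet> (T *v x)) * (X$i \<bullet> (T *v y)))" for s x y
    unfolding Bm_def wg_def by (simp add: conj_dot[OF symT] W_dot)
  have symA: "sym_mat A"
  proof (rule sym_from_dot)
    fix x y
    have "(A *v x) \<bullet> y = y \<bullet> (A *v x)" by (simp add: inner_commute)
    then show "x \<bullet> (A *v y) = (A *v x) \<bullet> y" by (simp add: Adot mult.commute)
  qed
  have symB: "sym_mat (Bm s)" for s
  proof (rule sym_from_dot)
    fix x y
    have "(Bm s *v x) \<bullet> y = y \<bullet> (Bm s *v x)" by (simp add: inner_commute)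
    then show "x \<bullet> (Bm s *v y) = (Bm s *v x) \<bullet> y" by (simp add: Bdot mult_ac)
  qed
  have mBle: "mB \<le> lambda_min (Bm s)" for s
    unfolding mB_def by (rule Min_le) auto
  define dd where "dd \<beta> i = 1 - gfun (X $ i \<bullet> \<beta>) * (if Y i = 1 then 1 else 0)
                                 - gfun (- (X $ i \<bullet> \<beta>)) * (if Y i = 0 then 1 else 0)" for \<beta> i
  have Dm: "Dmat X Y \<beta> = diag_mat (dd \<beta>)" for \<beta> by (simp add: Dmat_def dd_def[abs_def])
  define sb where "sb \<beta> = (\<lambda>k. 0 \<le> \<beta> $ k)" for \<beta> :: "real^'p"
  have dd_bnd: "0 \<le> dd \<beta> i \<and> dd \<beta> i \<le> 1 - (2 / pi) * wg (sb \<beta>) i" for \<beta> i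
  proof -
    have g01: "0 \<le> gfun t" "gfun t \<le> 1" for t using gfun_nonneg gfun_le1 by auto
    have Yc: "Y i = 0 \<or> Y i = 1" using Y01 by auto
    then show ?thesis
    proof
      assume Y0: "Y i = 0"
      have "dd \<beta> i = 1 - gfun (- (X $ i \<bullet> \<beta>))" by (simp add: dd_def Y0)
      moreover have "wg (sb \<beta>) i = (if X$i \<in> orthant (sb \<beta>) then 1 else 0)" by (simp add: wg_def Y0)
      moreover have "2 / pi \<le> gfun (- (X $ i \<bullet> \<beta>))" if "X$i \<in> orthant (sb \<beta>)"
        using orth_dot[of "X$i" \<beta>] that by (intro gfun_ge) (simp add: sb_def)
      ultimately show ?thesis using g01[of "- (X $ i \<bullet> \<beta>)"] by auto
    next
      assume Y1: "Y i = 1"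
      have "dd \<beta> i = 1 - gfun (X $ i \<bullet> \<beta>)" by (simp add: dd_def Y1)
      moreover have "wg (sb \<beta>) i = (if X$i \<in> uminus ` orthant (sb \<beta>) then 1 else 0)" by (simp add: wg_def Y1)
      moreover have "2 / pi \<le> gfun (X $ i \<bullet> \<beta>)" if Xm: "X$i \<in> uminus ` orthant (sb \<beta>)"
      proof -
        obtain z where z: "z \<in> orthant (sb \<beta>)" "X$i = - z" using Xm by blast
        have "0 \<le> z \<bullet> \<beta>" using orth_dot[of z \<beta>] z(1) by (simp add: sb_def)
        then show ?thesis using z(2) by (intro gfun_ge) simp
      qed
      ultimately show ?thesis using g01[of "X $ i \<bullet> \<beta>"] by auto
    qed
  qed
  define bl where "bl \<beta> a b = (\<Sum>i\<in>UNIV. dd \<beta> i * (X$i \<bullet> a) * (X$i \<bullet> b))" for \<beta> a b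
  have Ndot: "a \<bullet> (transpose X ** Dmat X Y \<beta> ** X *v b) = bl \<beta> a b" for \<beta> a b
    by (simp add: Dm XDX_dot bl_def)
  have bl_nn: "0 \<le> bl \<beta> a a" for \<beta> a
    unfolding bl_def using dd_bnd by (intro sum_nonneg) (simp add: mult.assoc)
  have bl_up: "bl \<beta> (T *v y) (T *v y) \<le> c * (y \<bullet> y)" for \<beta> y
  proof -
    let ?z = "T *v y"
    have "bl \<beta> ?z ?z \<le> (\<Sum>i\<in>UNIV. (1 - (2 / pi) * wg (sb \<beta>) i) * (X$i \<bullet> ?z) * (X$i \<bullet> ?z))"
      unfolding bl_def using dd_bnd
      by (intro sum_mono) (simp add: mult.assoc mult_right_mono)
    also have "\<dots> = y \<bullet> (A *v y) - (2 / pi) * (y \<bullet> (Bm (sb \<beta>) *v y))"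
      by (simp add: Adot Bdot algebra_simps sum_subtractf sum_distrib_left)
    also have "\<dots> \<le> lambda_max A * (y \<bullet> y) - (2 / pi) * (mB * (y \<bullet> y))"
    proof -
      have "y \<bullet> (A *v y) \<le> lambda_max A * (y \<bullet> y)" by (rule rayleigh_max[OF symA])
      moreover have "mB * (y \<bullet> y) \<le> y \<bullet> (Bm (sb \<beta>) *v y)"
        using rayleigh_min[OF symB, of "sb \<beta>" y] mBle[of "sb \<beta>"]
        by (meson inner_ge_zero mult_right_mono order_trans)
      moreover have "(2 / pi) * (mB * (y \<bullet> y)) \<le> (2 / pi) * (y \<bullet> (Bm (sb \<beta>) *v y))"
        using calculation(2) by (rule mult_left_mono) (simp add: less_imp_le)
      ultimately show ?thesis by linarith
    qed
    also have "\<dots> = c * (y \<bullet> y)" by (simp add: c_def algebra_simps)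
    finally show ?thesis .
  qed
  have bl_sym: "bl \<beta> a b = bl \<beta> b a" for \<beta> a b unfolding bl_def by (simp add: mult_ac)
  have bl_cs: "(bl \<beta> a b)\<^sup>2 \<le> bl \<beta> a a * bl \<beta> b b" for \<beta> a b
    unfolding bl_def using wCS[of "dd \<beta>" "\<lambda>i. X$i \<bullet> a" "\<lambda>i. X$i \<bullet> b"] dd_bnd by auto
  have TSa: "T *v (S *v \<alpha>) = \<alpha>" for \<alpha> by (simp add: matrix_vector_mul_assoc TS)
  have key: "(norm (T *v (transpose X ** Dmat X Y (Bhat + t *\<^sub>R \<alpha>) ** X *v \<alpha>)))\<^sup>2
                    / (norm (S *v \<alpha>))\<^sup>2 \<le> c\<^sup>2 \<and> 0 \<le> c" if a0: "\<alpha> \<noteq> 0" for t \<alpha>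
  proof -
    define \<beta> where "\<beta> = Bhat + t *\<^sub>R \<alpha>"
    define N where "N = transpose X ** Dmat X Y \<beta> ** X"
    define u where "u = S *v \<alpha>"
    define w where "w = T *v (N *v \<alpha>)"
    have au: "\<alpha> = T *v u" by (simp add: u_def TSa)
    have u0: "u \<noteq> 0" using a0 au by auto
    have uu: "0 < u \<bullet> u" using u0 by simp
    have ww: "w \<bullet> w = bl \<beta> (T *v w) (T *v u)"
    proof -
      have "w \<bullet> w = w \<bullet> (T *v (N *v (T *v u)))" by (simp add: w_def au[symmetric])
      also have "\<dots> = (T *v w) \<bullet> (N *v (T *v u))" by (rule sym_dot[OF symT])
      also have "\<dots> = bl \<beta> (T *v w) (T *v u)" by (simp add: N_def Ndot)
      finally show ?thesis .
    qed
    have c0: "0 \<le> c"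
    proof -
      have "0 \<le> bl \<beta> (T *v u) (T *v u)" by (rule bl_nn)
      also have "\<dots> \<le> c * (u \<bullet> u)" by (rule bl_up)
      finally show ?thesis using uu by (simp add: zero_le_mult_iff)
    qed
    have "(w \<bullet> w)\<^sup>2 \<le> bl \<beta> (T *v w) (T *v w) * bl \<beta> (T *v u) (T *v u)"
      unfolding ww by (rule bl_cs)
    also have "\<dots> \<le> (c * (w \<bullet> w)) * (c * (u \<bullet> u))"
      by (intro mult_mono bl_up bl_nn) (use c0 in simp)
    finally have ineq: "(w \<bullet> w) * (w \<bullet> w) \<le> (w \<bullet> w) * (c\<^sup>2 * (u \<bullet> u))"
      by (simp add: power2_eq_square mult_ac)
    have wu: "w \<bullet> w \<le> c\<^sup>2 * (u \<bullet> u)"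
    proof (cases "w \<bullet> w = 0")
      case True then show ?thesis using uu by simp
    next
      case False
      then have "0 < w \<bullet> w" by (simp add: order_less_le)
      with ineq show ?thesis by simp
    qed
    have "(norm w)\<^sup>2 / (norm u)\<^sup>2 \<le> c\<^sup>2"
      using wu uu by (simp add: power2_norm_eq_inner divide_le_eq)
    then show ?thesis using c0 by (simp add: w_def N_def u_def \<beta>_def)
  qed
  have one0: "(1::real^'p) \<noteq> 0" by (simp add: vec_eq_iff)
  have c0: "0 \<le> c" using key[OF one0, of "1/2"] by simp
  have "lam \<le> c\<^sup>2"
    unfolding lam_def T_def[symmetric] S_def[symmetric]
  proof (rule cSUP_least)
    show "{0<..<1::real} \<noteq> {}" by (auto intro: exI[of _ "1/2"])
    fix t :: real assume "t \<in> {0<..<1}"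
    show "(SUP \<alpha>\<in>{\<alpha>::real^'p. \<alpha> \<noteq> 0}. (norm (T *v (transpose X ** Dmat X Y (Bhat + t *\<^sub>R \<alpha>) ** X *v \<alpha>)))\<^sup>2
                    / (norm (S *v \<alpha>))\<^sup>2) \<le> c\<^sup>2"
    proof (rule cSUP_least)
      show "{\<alpha>::real^'p. \<alpha> \<noteq> 0} \<noteq> {}" using one0 by blast
      fix \<alpha> :: "real^'p" assume "\<alpha> \<in> {\<alpha>. \<alpha> \<noteq> 0}"
      then show "(norm (T *v (transpose X ** Dmat X Y (Bhat + t *\<^sub>R \<alpha>) ** X *v \<alpha>)))\<^sup>2
                    / (norm (S *v \<alpha>))\<^sup>2 \<le> c\<^sup>2" using key by blast
    qed
  qed
  then have "sqrt lam \<le> sqrt (c\<^sup>2)" by (rule real_sqrt_le_mono)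
  also have "\<dots> = c" using c0 by simp
  finally show ?thesis by (simp add: c_def A_def K_def mB_def Bm_def T_def)
qed

end
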